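(* Suppose $|\langle\Theta\rangle|$ divides $\alpha$ and $|\langle\theta\rangle|$ divides $\beta$. Let $\mathcal{C}=\mathcal{C}'\otimes\mathscr{C}$ be an $\mathbb{F}_q\mathcal{R}$-skew cyclic code of length $(\alpha,\beta)$, where $\mathcal{C}'=\langle f(x)\rangle$ is a skew cyclic code of length $\alpha$ over $\mathbb{F}_q$ and $\mathscr{C}=\xi_1\mathcal{C}_1\oplus\xi_2\mathcal{C}_2=\langle g(x)\rangle$ is a skew cyclic code of length $\beta$ over $\mathcal{R}$ with $g(x)=\xi_1g_1(x)+\xi_2g_2(x)$, $\mathcal{C}_i=\langle g_i(x)\rangle$ skew cyclic codes of length $\beta$ over $\mathbb{F}_q$, and $x^\alpha-1=h(x)f(x)$, $x^\beta-1=h_i(x)g_i(x)$ in $\mathbb{F}_q[x;\Theta]$ for $i=1,2$. Then $\mathcal{C}^\perp\subseteq\mathcal{C}$ if and only if $h^\dagger(x)h(x)$ is divisible by $x^\alpha-1$ from the right side and $h_i^\dagger(x)h_i(x)$ is divisible by $x^\beta-1$ from the right side for $i=1,2$.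
   Context: Let $p$ be a prime, $q=p^m$, $\mathcal{R}=\mathbb{F}_q[u]/\langle u^2-u\rangle$, $\xi_1=1-u$, $\xi_2=u$. Fix $i$; $\Theta(a)=a^{p^i}$ on $\mathbb{F}_q$, $\theta(a+ub)=a^{p^i}+ub^{p^i}$ on $\mathcal{R}$, $\eta(a+ub)=a$; $|\langle\cdot\rangle|$ denotes the order of an automorphism. $\mathbb{F}_q[x;\Theta]$ is the skew polynomial ring with $(ax^i)(bx^j)=a\Theta^i(b)x^{i+j}$ (similarly $\mathcal{R}[x;\theta]$). A skew cyclic code of length $n$ over $\mathbb{F}_q$ is a linear code closed under $(c_0,\dots,c_{n-1})\mapsto(\Theta(c_{n-1}),\Theta(c_0),\dots,\Theta(c_{n-2}))$; identifying vectors with polynomials, it is the left submodule $\langle g(x)\rangle$ of $\mathbb{F}_q[x;\Theta]/\langle x^n-1\rangle$ generated by a right divisor $g$ of $x^n-1$. Skew cyclic codes over $\mathcal{R}$ are defined analogously with $\theta$. An $\mathbb{F}_q\mathcal{R}$-skew cyclic code of length $(\alpha,\beta)$ is an $\mathcal{R}$-submodule of $\mathbb{F}_q^\alpha\times\mathcal{R}^\beta$ (with $s*(x,y)=(\eta(s)x,sy)$ componentwise) closed under $\sigma(x_0,\dots,x_{\alpha-1},y_0,\dots,y_{\beta-1})=(\Theta(x_{\alpha-1}),\Theta(x_0),\dots,\Theta(x_{\alpha-2}),\theta(y_{\beta-1}),\theta(y_0),\dots,\theta(y_{\beta-2}))$; $A\otimes B=\{(a,b):a\in A,b\in B\}$.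 $\mathcal{C}^\perp$ is the dual with respect to $l\cdot l'=u\sum_{i=0}^{\alpha-1}x_ix'_i+\sum_{j=0}^{\beta-1}y_jy'_j$. For $h(x)=h_0+h_1x+\dots+h_sx^s$, $h^\dagger(x)=h_s+\Theta(h_{s-1})x+\dots+\Theta^s(h_0)x^s$. "$a(x)$ divisible by $b(x)$ from the right side" means $a(x)=c(x)b(x)$ for some $c(x)$ in the skew polynomial ring. *)

theory Defs
  imports "HOL-Computational_Algebra.Polynomial"
begin

text \<open>RQ a b represents the element a + u b of R (u^2 = u).\<close>
datatype 'a rq = RQ 'a 'a

fun rq_fst :: "'a rq \<Rightarrow> 'a" where "rq_fst (RQ a b) = a"
fun rq_snd :: "'a rq \<Rightarrow> 'a" where "rq_snd (RQ a b) = b"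

lemma rq_eq_iff: "x = y \<longleftrightarrow> rq_fst x = rq_fst y \<and> rq_snd x = rq_snd y"
  by (cases x; cases y) auto

instantiation rq :: (comm_ring_1) comm_ring_1
begin
definition "0 = RQ 0 0"
definition "1 = RQ 1 0"
definition "x + y = RQ (rq_fst x + rq_fst y) (rq_snd x + rq_snd y)"
definition "x - y = RQ (rq_fst x - rq_fst y) (rq_snd x - rq_snd y)"
definition "- x = RQ (- rq_fst x) (- rq_snd x)"
definition "x * y = RQ (rq_fst x * rq_fst y)
   (rq_fst x * rq_snd y + rq_snd x * rq_fst y + rq_snd x * rq_snd y)"
instance
  by standard (auto simp: rq_eq_iff zero_rq_def one_rq_def plus_rq_def minus_rq_def
      uminus_rq_def times_rq_def algebra_simps)
end

definition u_R :: "'a::comm_ring_1 rq" where "u_R = RQ 0 1"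
definition xi1 :: "'a::comm_ring_1 rq" where "xi1 = 1 - u_R"
definition xi2 :: "'a::comm_ring_1 rq" where "xi2 = u_R"

definition emb_R :: "'a::comm_ring_1 \<Rightarrow> 'a rq" where "emb_R a = RQ a 0"
definition eta :: "'a rq \<Rightarrow> 'a" where "eta = rq_fst"

definition Theta :: "nat \<Rightarrow> 'a::{field,finite} \<Rightarrow> 'a" where
  "Theta i a = a ^ (CHAR('a) ^ i)"

definition thetaR :: "('a \<Rightarrow> 'a) \<Rightarrow> 'a rq \<Rightarrow> 'a rq" where
  "thetaR T x = RQ (T (rq_fst x)) (T (rq_snd x))"

definition aut_ord :: "('b \<Rightarrow> 'b) \<Rightarrow> nat" where
  "aut_ord T = (LEAST k. 0 < k \<and> T ^^ k = id)"

text \<open>Skew polynomials are represented by their coefficient sequences (type 'b poly);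
  multiplication follows (a x^i)(b x^j) = a T^i(b) x^(i+j).\<close>
definition skew_mult :: "('b::comm_ring_1 \<Rightarrow> 'b) \<Rightarrow> 'b poly \<Rightarrow> 'b poly \<Rightarrow> 'b poly" where
  "skew_mult T f g = (\<Sum>i\<le>degree f. \<Sum>j\<le>degree g. monom (coeff f i * (T ^^ i) (coeff g j)) (i + j))"

definition xn_minus_1 :: "nat \<Rightarrow> 'b::comm_ring_1 poly" where
  "xn_minus_1 n = monom 1 n - 1"

definition right_dvd :: "('b::comm_ring_1 \<Rightarrow> 'b) \<Rightarrow> 'b poly \<Rightarrow> 'b poly \<Rightarrow> bool" where
  "right_dvd T b a \<longleftrightarrow> (\<exists>c. a = skew_mult T c b)"

definition dagger :: "('b::comm_ring_1 \<Rightarrow> 'b) \<Rightarrow> 'b poly \<Rightarrow> 'b poly" where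
  "dagger T h = (\<Sum>k\<le>degree h. monom ((T ^^ k) (coeff h (degree h - k))) k)"

text \<open>Vectors of length n are identified with polynomials of degree < n.\<close>
definition vecs :: "nat \<Rightarrow> 'b::zero poly set" where
  "vecs n = {c. \<forall>k\<ge>n. coeff c k = 0}"

text \<open>The left submodule generated by (the class of) g in T-skew polynomials modulo
  x^n - 1, each residue class represented by its representative of degree < n.\<close>
definition skew_gen_code :: "('b::comm_ring_1 \<Rightarrow> 'b) \<Rightarrow> nat \<Rightarrow> 'b poly \<Rightarrow> 'b poly set" where
  "skew_gen_code T n g = {c \<in> vecs n. \<exists>a b. c = skew_mult T a g + skew_mult T b (xn_minus_1 n)}"

definition skew_shift :: "('b::comm_ring_1 \<Rightarrow> 'b) \<Rightarrow> nat \<Rightarrow> 'b poly \<Rightarrow> 'b poly" where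
  "skew_shift T n c = (\<Sum>k<n. monom (T (coeff c ((k + n - 1) mod n))) k)"

definition xi_sum :: "'a::comm_ring_1 poly set \<Rightarrow> 'a poly set \<Rightarrow> 'a rq poly set" where
  "xi_sum C1 C2 = {smult xi1 (map_poly emb_R c1) + smult xi2 (map_poly emb_R c2) | c1 c2.
       c1 \<in> C1 \<and> c2 \<in> C2}"

definition amb :: "nat \<Rightarrow> nat \<Rightarrow> ('a::comm_ring_1 poly \<times> 'a rq poly) set" where
  "amb \<alpha> \<beta> = vecs \<alpha> \<times> vecs \<beta>"

definition tensor :: "'x set \<Rightarrow> 'y set \<Rightarrow> ('x \<times> 'y) set" where
  "tensor A B = {(a, b). a \<in> A \<and> b \<in> B}"

definition FqR_smul :: "'a::comm_ring_1 rq \<Rightarrow> ('a poly \<times> 'a rq poly) \<Rightarrow> ('a poly \<times> 'a rq poly)" where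
  "FqR_smul s l = (smult (eta s) (fst l), smult s (snd l))"

definition FqR_sigma :: "('a::comm_ring_1 \<Rightarrow> 'a) \<Rightarrow> nat \<Rightarrow> nat \<Rightarrow>
    ('a poly \<times> 'a rq poly) \<Rightarrow> ('a poly \<times> 'a rq poly)" where
  "FqR_sigma T \<alpha> \<beta> l = (skew_shift T \<alpha> (fst l), skew_shift (thetaR T) \<beta> (snd l))"

definition FqR_skew_cyclic :: "('a::comm_ring_1 \<Rightarrow> 'a) \<Rightarrow> nat \<Rightarrow> nat \<Rightarrow>
    ('a poly \<times> 'a rq poly) set \<Rightarrow> bool" where
  "FqR_skew_cyclic T \<alpha> \<beta> C \<longleftrightarrow>
     C \<subseteq> amb \<alpha> \<beta> \<and> (0, 0) \<in> C \<and>
     (\<forall>l\<in>C. \<forall>l'\<in>C. (fst l + fst l', snd l + snd l') \<in> C) \<and>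
     (\<forall>s. \<forall>l\<in>C. FqR_smul s l \<in> C) \<and>
     (\<forall>l\<in>C. FqR_sigma T \<alpha> \<beta> l \<in> C)"

definition FqR_inner :: "nat \<Rightarrow> nat \<Rightarrow> ('a::comm_ring_1 poly \<times> 'a rq poly) \<Rightarrow>
    ('a poly \<times> 'a rq poly) \<Rightarrow> 'a rq" where
  "FqR_inner \<alpha> \<beta> l l' =
     u_R * emb_R (\<Sum>i<\<alpha>. coeff (fst l) i * coeff (fst l') i)
     + (\<Sum>j<\<beta>. coeff (snd l) j * coeff (snd l') j)"

definition FqR_dual :: "nat \<Rightarrow> nat \<Rightarrow> ('a::comm_ring_1 poly \<times> 'a rq poly) set \<Rightarrow>
    ('a poly \<times> 'a rq poly) set" where
  "FqR_dual \<alpha> \<beta> C = {l \<in> amb \<alpha> \<beta>. \<forall>l'\<in>C. FqR_inner \<alpha> \<beta> l l' = 0}"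

end

theory Submission
  imports Defs "HOL-Computational_Algebra.Primes"
begin

locale skewT =
  fixes T :: "'a::field \<Rightarrow> 'a"
  assumes T_add: "T (a + b) = T a + T b"
    and T_mult: "T (a * b) = T a * T b"
    and T_one: "T 1 = 1"
    and T_inj: "inj T"
begin

lemma T_zero: "T 0 = 0"
proof -
  have "T 0 + 0 = T 0 + T 0" using T_add[of 0 0] by simp
  thus ?thesis by (metis add_left_cancel)
qed

lemma Tn_add: "(T ^^ n) (a + b) = (T ^^ n) a + (T ^^ n) b"
  by (induction n) (auto simp: T_add)

lemma Tn_mult: "(T ^^ n) (a * b) = (T ^^ n) a * (T ^^ n) b"
  by (induction n) (auto simp: T_mult)

lemma Tn_one: "(T ^^ n) 1 = 1"
  by (induction n) (auto simp: T_one)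

lemma Tn_zero: "(T ^^ n) 0 = 0"
  by (induction n) (auto simp: T_zero)

lemma Tn_neg: "(T ^^ n) (- a) = - (T ^^ n) a"
  using Tn_add[of n a "-a"] by (simp add: Tn_zero eq_neg_iff_add_eq_0 add.commute)

lemma Tn_diff: "(T ^^ n) (a - b) = (T ^^ n) a - (T ^^ n) b"
  using Tn_add[of n a "-b"] by (simp add: Tn_neg)

lemma Tn_sum: "(T ^^ n) (sum f A) = (\<Sum>x\<in>A. (T ^^ n) (f x))"
  by (induction A rule: infinite_finite_induct) (auto simp: Tn_zero Tn_add)

lemma Tn_inj: "inj (T ^^ n)"
  using T_inj by (simp add: inj_fn)

lemma Tn_eq0: "(T ^^ n) a = 0 \<longleftrightarrow> a = 0"
  using Tn_inj[of n] Tn_zero[of n] by (metis injD)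

lemma Tn_comp: "(T ^^ m) ((T ^^ n) a) = (T ^^ (m + n)) a"
  by (simp add: funpow_add)

lemma coeff_sm: "coeff (skew_mult T f g) k = (\<Sum>i\<le>k. coeff f i * (T ^^ i) (coeff g (k - i)))"
proof -
  have inner: "(\<Sum>j\<le>degree g. if i + j = k then coeff f i * (T ^^ i) (coeff g j) else 0)
      = (if i \<le> k then coeff f i * (T ^^ i) (coeff g (k - i)) else 0)" for i
  proof (cases "i \<le> k \<and> k - i \<le> degree g")
    case True
    have "(\<Sum>j\<le>degree g. if i + j = k then coeff f i * (T ^^ i) (coeff g j) else 0)
       = (\<Sum>j\<le>degree g. if j = k - i then coeff f i * (T ^^ i) (coeff g (k - i)) else 0)"
      by (rule sum.cong) (use True in \<open>auto simp: coeff_monom\<close>)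
    also have "\<dots> = coeff f i * (T ^^ i) (coeff g (k - i))"
      using True by simp
    finally show ?thesis using True by simp
  next
    case False
    have "(\<Sum>j\<le>degree g. if i + j = k then coeff f i * (T ^^ i) (coeff g j) else 0) = 0"
      by (rule sum.neutral) (use False in \<open>auto simp: coeff_monom\<close>)
    moreover have "i \<le> k \<Longrightarrow> coeff g (k - i) = 0"
      using False by (simp add: coeff_eq_0)
    ultimately show ?thesis by (auto simp: Tn_zero)
  qed
  have "coeff (skew_mult T f g) k = (\<Sum>i\<le>degree f. if i \<le> k then coeff f i * (T ^^ i) (coeff g (k - i)) else 0)"
    unfolding skew_mult_def coeff_sum coeff_monom by (intro sum.cong refl inner)
  also have "\<dots> = (\<Sum>i\<le>max k (degree f). if i \<le> k then coeff f i * (T ^^ i) (coeff g (k - i)) else 0)"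
    by (rule sum.mono_neutral_left) (auto simp: coeff_eq_0)
  also have "\<dots> = (\<Sum>i\<le>k. if i \<le> k then coeff f i * (T ^^ i) (coeff g (k - i)) else 0)"
    by (rule sum.mono_neutral_right) (auto simp: coeff_eq_0)
  also have "\<dots> = (\<Sum>i\<le>k. coeff f i * (T ^^ i) (coeff g (k - i)))"
    by simp
  finally show ?thesis .
qed

lemma sm_add_left: "skew_mult T (f + g) h = skew_mult T f h + skew_mult T g h"
  by (rule poly_eqI) (simp add: coeff_sm distrib_right sum.distrib)

lemma sm_add_right: "skew_mult T f (g + h) = skew_mult T f g + skew_mult T f h"
  by (rule poly_eqI) (simp add: coeff_sm Tn_add distrib_left sum.distrib)

lemma sm_zero_left [simp]: "skew_mult T 0 f = 0"
  by (rule poly_eqI) (simp add: coeff_sm)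

lemma sm_zero_right [simp]: "skew_mult T f 0 = 0"
  by (rule poly_eqI) (simp add: coeff_sm Tn_zero)

lemma sm_minus_left: "skew_mult T (- f) g = - skew_mult T f g"
  by (rule poly_eqI) (simp add: coeff_sm sum_negf)

lemma sm_minus_right: "skew_mult T f (- g) = - skew_mult T f g"
  by (rule poly_eqI) (simp add: coeff_sm Tn_neg sum_negf)

lemma sm_diff_left: "skew_mult T (f - g) h = skew_mult T f h - skew_mult T g h"
  using sm_add_left[of f "-g" h] by (simp add: sm_minus_left)

lemma sm_diff_right: "skew_mult T f (g - h) = skew_mult T f g - skew_mult T f h"
  using sm_add_right[of f g "-h"] by (simp add: sm_minus_right)

lemma sm_sum_left: "skew_mult T (sum F A) g = (\<Sum>x\<in>A. skew_mult T (F x) g)"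
  by (induction A rule: infinite_finite_induct) (auto simp: sm_add_left)

lemma sm_sum_right: "skew_mult T g (sum F A) = (\<Sum>x\<in>A. skew_mult T g (F x))"
  by (induction A rule: infinite_finite_induct) (auto simp: sm_add_right)

lemma coeff_sm_monom_left:
  "coeff (skew_mult T (monom a l) f) k = (if l \<le> k then a * (T ^^ l) (coeff f (k - l)) else 0)"
proof -
  have "coeff (skew_mult T (monom a l) f) k = (\<Sum>i\<le>k. if i = l then a * (T ^^ l) (coeff f (k - l)) else 0)"
    unfolding coeff_sm by (rule sum.cong) (auto simp: coeff_monom)
  thus ?thesis by simp
qed

lemma coeff_sm_monom_right:
  "coeff (skew_mult T f (monom b j)) k = (if j \<le> k then coeff f (k - j) * (T ^^ (k - j)) b else 0)"
proof -
  have "coeff (skew_mult T f (monom b j)) k = (\<Sum>i\<le>k. if i = k - j \<and> j \<le> k then coeff f (k - j) * (T ^^ (k - j)) b else 0)"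
    unfolding coeff_sm by (rule sum.cong) (auto simp: coeff_monom Tn_zero)
  thus ?thesis by simp
qed

lemma sm_monom_monom: "skew_mult T (monom a i) (monom b j) = monom (a * (T ^^ i) b) (i + j)"
  by (rule poly_eqI) (auto simp: coeff_sm_monom_left coeff_monom Tn_zero)

lemma sm_one_left [simp]: "skew_mult T 1 f = f"
  by (rule poly_eqI) (simp add: coeff_sm_monom_left flip: monom_eq_1)

lemma sm_one_right [simp]: "skew_mult T f 1 = f"
  by (rule poly_eqI) (simp add: coeff_sm_monom_right Tn_one flip: monom_eq_1)

lemma sm_assoc: "skew_mult T (skew_mult T f g) h = skew_mult T f (skew_mult T g h)"
proof -
  let ?F = "\<lambda>p. (\<Sum>i\<le>degree p. monom (coeff p i) i)"
  have "skew_mult T (skew_mult T f g) h = skew_mult T (skew_mult T (?F f) (?F g)) (?F h)"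
    by (simp only: poly_as_sum_of_monoms)
  also have "\<dots> = skew_mult T (?F f) (skew_mult T (?F g) (?F h))"
    by (simp add: sm_sum_left sm_sum_right sm_monom_monom Tn_mult Tn_comp mult.assoc add.assoc)
  also have "\<dots> = skew_mult T f (skew_mult T g h)"
    by (simp only: poly_as_sum_of_monoms)
  finally show ?thesis .
qed

lemma coeff_sm_high:
  assumes "degree f + degree g < k"
  shows "coeff (skew_mult T f g) k = 0"
  unfolding coeff_sm
proof (rule sum.neutral, intro ballI)
  fix i assume "i \<in> {..k}"
  show "coeff f i * (T ^^ i) (coeff g (k - i)) = 0"
  proof (cases "i \<le> degree f")
    case True
    hence "coeff g (k - i) = 0" using assms by (intro coeff_eq_0) linarith
    thus ?thesis by (simp add: Tn_zero)
  qed (simp add: coeff_eq_0)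
qed

lemma coeff_sm_top:
  "coeff (skew_mult T f g) (degree f + degree g) = lead_coeff f * (T ^^ degree f) (lead_coeff g)"
proof -
  have "coeff (skew_mult T f g) (degree f + degree g) =
     (\<Sum>i\<le>degree f + degree g. if i = degree f then lead_coeff f * (T ^^ degree f) (lead_coeff g) else 0)"
    unfolding coeff_sm
  proof (rule sum.cong[OF refl])
    fix i assume "i \<in> {..degree f + degree g}"
    show "coeff f i * (T ^^ i) (coeff g (degree f + degree g - i)) =
        (if i = degree f then lead_coeff f * (T ^^ degree f) (lead_coeff g) else 0)"
    proof (cases "i < degree f")
      case True
      hence "coeff g (degree f + degree g - i) = 0" by (intro coeff_eq_0) linarith
      thus ?thesis using True by (simp add: Tn_zero)
    next
      case False
      thus ?thesis by (cases "i = degree f") (auto simp: coeff_eq_0)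
    qed
  qed
  thus ?thesis by simp
qed

lemma sm_nonzero:
  assumes "f \<noteq> 0" "g \<noteq> 0"
  shows "skew_mult T f g \<noteq> 0" and "degree (skew_mult T f g) = degree f + degree g"
proof -
  have c: "coeff (skew_mult T f g) (degree f + degree g) \<noteq> 0"
    using assms by (simp add: coeff_sm_top Tn_eq0)
  thus "skew_mult T f g \<noteq> 0" by auto
  show "degree (skew_mult T f g) = degree f + degree g"
  proof (rule antisym)
    show "degree (skew_mult T f g) \<le> degree f + degree g"
      by (rule degree_le) (auto intro: coeff_sm_high)
    show "degree f + degree g \<le> degree (skew_mult T f g)"
      using c by (rule le_degree)
  qed
qed

lemma sm_eq_0_iff: "skew_mult T f g = 0 \<longleftrightarrow> f = 0 \<or> g = 0"
  using sm_nonzero(1)[of f g] by auto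

lemma sm_cancel_right:
  assumes "g \<noteq> 0" "skew_mult T a g = skew_mult T b g"
  shows "a = b"
proof -
  have "skew_mult T (a - b) g = 0" using assms by (simp add: sm_diff_left)
  thus ?thesis using assms by (simp add: sm_eq_0_iff)
qed

lemma coeff_sm_low:
  assumes "\<forall>i<k. coeff d i = 0"
  shows "coeff (skew_mult T d e) k = coeff d k * (T ^^ k) (coeff e 0)"
proof -
  have "coeff (skew_mult T d e) k = (\<Sum>i\<le>k. if i = k then coeff d k * (T ^^ k) (coeff e 0) else 0)"
    unfolding coeff_sm by (rule sum.cong) (use assms in auto)
  thus ?thesis by simp
qed

lemma sm_central_monom:
  assumes "(T ^^ n) = id"
  shows "skew_mult T (monom 1 n) a = skew_mult T a (monom 1 n)"
proof -
  have "(T ^^ m) 1 = 1" for m by (rule Tn_one)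
  thus ?thesis by (intro poly_eqI) (simp add: coeff_sm_monom_left coeff_sm_monom_right assms)
qed

lemma sm_central:
  assumes "(T ^^ n) = id"
  shows "skew_mult T (xn_minus_1 n) a = skew_mult T a (xn_minus_1 n)"
  unfolding xn_minus_1_def by (simp add: sm_diff_left sm_diff_right sm_central_monom[OF assms])

end

definition ipn :: "nat \<Rightarrow> 'a::comm_ring_1 poly \<Rightarrow> 'a poly \<Rightarrow> 'a" where
  "ipn n c d = (\<Sum>k<n. coeff c k * coeff d k)"

definition dualF :: "nat \<Rightarrow> 'a::comm_ring_1 poly set \<Rightarrow> 'a poly set" where
  "dualF n C = {c \<in> vecs n. \<forall>c'\<in>C. ipn n c c' = 0}"

definition trunc :: "nat \<Rightarrow> 'a::comm_ring_1 poly \<Rightarrow> 'a poly" where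
  "trunc m c = (\<Sum>k<m. monom (coeff c k) k)"

lemma coeff_trunc: "coeff (trunc m c) k = (if k < m then coeff c k else 0)"
  by (simp add: trunc_def coeff_sum coeff_monom)

lemma trunc_vecs: "trunc m c \<in> vecs m"
  by (simp add: vecs_def coeff_trunc)

lemma trunc_diff: "trunc m (c - d) = trunc m c - trunc m d"
  by (rule poly_eqI) (simp add: coeff_trunc)

lemma trunc_id: "c \<in> vecs m \<Longrightarrow> trunc m c = c"
  by (rule poly_eqI) (auto simp: coeff_trunc vecs_def)

lemma vecs_iff: "c \<in> vecs m \<longleftrightarrow> c = 0 \<or> degree c < m"
proof
  assume "c \<in> vecs m"
  show "c = 0 \<or> degree c < m"
  proof (rule ccontr)
    assume a: "\<not> (c = 0 \<or> degree c < m)"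
    hence "coeff c (degree c) = 0" using \<open>c \<in> vecs m\<close> by (auto simp: vecs_def)
    thus False using a by simp
  qed
next
  assume "c = 0 \<or> degree c < m"
  thus "c \<in> vecs m" by (auto simp: vecs_def coeff_eq_0)
qed

lemma vecs_zero [simp]: "0 \<in> vecs m"
  by (simp add: vecs_def)

lemma vecs_0: "vecs 0 = {0}"
  by (auto simp: vecs_iff)

lemma vecs_diff: "c \<in> vecs m \<Longrightarrow> d \<in> vecs m \<Longrightarrow> c - d \<in> vecs m"
  by (simp add: vecs_def)

lemma finite_vecs: "finite (vecs m :: 'a::{comm_ring_1,finite} poly set)"
proof -
  have "(vecs m :: 'a poly set) \<subseteq> Poly ` {xs. set xs \<subseteq> UNIV \<and> length xs = m}"
  proof
    fix c :: "'a poly" assume c: "c \<in> vecs m"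
    have "c = Poly (map (coeff c) [0..<m])"
      by (rule poly_eqI) (use c in \<open>auto simp: nth_default_def vecs_def\<close>)
    thus "c \<in> Poly ` {xs. set xs \<subseteq> UNIV \<and> length xs = m}"
      by (intro image_eqI[of _ _ "map (coeff c) [0..<m]"]) auto
  qed
  moreover have "finite {xs. set xs \<subseteq> (UNIV :: 'a set) \<and> length xs = m}"
    using finite_lists_length_eq[OF finite_UNIV, of m] .
  ultimately show ?thesis by (meson finite_imageI finite_subset)
qed

lemma ipn_diff_left: "ipn n (c - d) e = ipn n c e - ipn n d e"
  by (simp add: ipn_def sum_subtractf algebra_simps)

lemma ipn_sum_left: "ipn n (sum F A) e = (\<Sum>x\<in>A. ipn n (F x) e)"
  unfolding ipn_def coeff_sum sum_distrib_right by (rule sum.swap)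

lemma ipn_sum_right: "ipn n e (sum F A) = (\<Sum>x\<in>A. ipn n e (F x))"
  unfolding ipn_def coeff_sum sum_distrib_left by (rule sum.swap)

lemma ipn_smult_left: "ipn n (smult a c) e = a * ipn n c e"
  by (simp add: ipn_def sum_distrib_left mult.assoc)

lemma ipn_smult_right: "ipn n e (smult a c) = a * ipn n e c"
  by (simp add: ipn_def sum_distrib_left algebra_simps)

lemma vecs_expand: "(c::'a::comm_ring_1 poly) \<in> vecs m \<Longrightarrow> c = (\<Sum>k<m. monom (coeff c k) k)"
  using trunc_id[of c m] by (simp add: trunc_def)

context skewT
begin

lemma sm_monom_smult: "skew_mult T (monom a l) f = smult a (skew_mult T (monom 1 l) f)"
  by (rule poly_eqI) (simp add: coeff_sm_monom_left)

end


locale skew_code = skewT T for T :: "'a::{field,finite} \<Rightarrow> 'a" +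
  fixes n :: nat and h g :: "'a poly"
  assumes n_pos: "0 < n" and Tn_id: "T ^^ n = id"
    and hg: "xn_minus_1 n = skew_mult T h g"
begin

abbreviation "dh \<equiv> degree h"
abbreviation "hdg \<equiv> dagger T h"

lemma coeff_E: "coeff (xn_minus_1 n :: 'a poly) k = (if k = n then 1 else if k = 0 then -1 else 0)"
  using n_pos by (auto simp: xn_minus_1_def coeff_monom)

lemma E_ne0: "(xn_minus_1 n :: 'a poly) \<noteq> 0"
proof
  assume "(xn_minus_1 n :: 'a poly) = 0"
  hence "coeff (xn_minus_1 n :: 'a poly) n = 0" by simp
  thus False by (simp add: coeff_E)
qed

lemma degree_E: "degree (xn_minus_1 n :: 'a poly) = n"
proof (rule antisym)
  show "degree (xn_minus_1 n :: 'a poly) \<le> n"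
    by (rule degree_le) (auto simp: coeff_E)
  show "n \<le> degree (xn_minus_1 n :: 'a poly)"
    by (rule le_degree) (simp add: coeff_E)
qed

lemma h_ne0: "h \<noteq> 0" and g_ne0: "g \<noteq> 0"
  using E_ne0 hg by (auto simp: sm_eq_0_iff)

lemma deg_sum: "dh + degree g = n"
  using sm_nonzero(2)[OF h_ne0 g_ne0] hg degree_E by simp

lemma gh: "skew_mult T g h = xn_minus_1 n"
proof -
  have "skew_mult T (skew_mult T g h) g = skew_mult T (xn_minus_1 n) g"
    by (simp add: sm_assoc hg[symmetric] sm_central[OF Tn_id])
  thus ?thesis using sm_cancel_right[OF g_ne0] by blast
qed

lemma h0g0: "coeff h 0 * coeff g 0 = -1"
proof -
  have "coeff (skew_mult T h g) 0 = coeff h 0 * coeff g 0"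
    by (simp add: coeff_sm)
  thus ?thesis using n_pos by (simp add: hg[symmetric] coeff_E)
qed

lemma h0_ne0: "coeff h 0 \<noteq> 0" and g0_ne0: "coeff g 0 \<noteq> 0"
  using h0g0 by auto

lemma coeff_hd: "coeff hdg k = (if k \<le> dh then (T ^^ k) (coeff h (dh - k)) else 0)"
  by (simp add: dagger_def coeff_sum coeff_monom)

lemma hd0: "coeff hdg 0 \<noteq> 0"
  using h_ne0 by (simp add: coeff_hd)

lemma hd_ne0: "hdg \<noteq> 0"
  using hd0 by auto

lemma degree_hd: "degree hdg = dh"
proof (rule antisym)
  show "degree hdg \<le> dh" by (rule degree_le) (simp add: coeff_hd)
  show "dh \<le> degree hdg" by (rule le_degree) (simp add: coeff_hd Tn_eq0 h0_ne0)
qed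

lemma code_eq: "skew_gen_code T n g = {c \<in> vecs n. \<exists>a. c = skew_mult T a g}"
proof (intro set_eqI iffI)
  fix c assume "c \<in> skew_gen_code T n g"
  then obtain a b where c: "c \<in> vecs n" "c = skew_mult T a g + skew_mult T b (xn_minus_1 n)"
    unfolding skew_gen_code_def by blast
  have "c = skew_mult T (a + skew_mult T b h) g"
    using c(2) by (simp add: hg sm_add_left sm_assoc)
  thus "c \<in> {c \<in> vecs n. \<exists>a. c = skew_mult T a g}" using c(1) by blast
next
  fix c assume "c \<in> {c \<in> vecs n. \<exists>a. c = skew_mult T a g}"
  then obtain a where "c \<in> vecs n" "c = skew_mult T a g" by blast
  thus "c \<in> skew_gen_code T n g"
    unfolding skew_gen_code_def by (intro CollectI conjI exI[of _ a] exI[of _ 0]) auto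
qed

lemma code_vecs:
  assumes "skew_mult T a g \<in> vecs n"
  shows "a \<in> vecs dh"
proof (cases "a = 0")
  case False
  hence "degree (skew_mult T a g) = degree a + degree g" "skew_mult T a g \<noteq> 0"
    using sm_nonzero[OF False g_ne0] by auto
  thus ?thesis using assms deg_sum by (auto simp: vecs_iff)
qed simp

lemma sm_vecs:
  assumes "a \<in> vecs k" "degree p + k \<le> n"
  shows "skew_mult T a p \<in> vecs n"
proof (cases "a = 0 \<or> p = 0")
  case False
  hence "degree (skew_mult T a p) = degree a + degree p" "a \<noteq> 0"
    using sm_nonzero(2)[of a p] by auto
  thus ?thesis using assms by (auto simp: vecs_iff)
qed (auto simp: sm_eq_0_iff)

lemma monom_vecs: "j < k \<Longrightarrow> monom (1::'a) j \<in> vecs k"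
  by (simp add: vecs_iff degree_monom_eq)

lemma orth_monom:
  assumes l: "l < n - dh" and j: "j < dh"
  shows "ipn n (skew_mult T (monom 1 l) hdg) (skew_mult T (monom 1 j) g) = 0"
proof -
  define t where "t = dh + l - j"
  have t: "0 < t" "t < n" using l j deg_sum by (auto simp: t_def)
  define G where "G k = (if j \<le> k \<and> k \<le> dh + l then
      (T ^^ j) (coeff g (k - j)) * (T ^^ k) (coeff h (dh + l - k)) else 0)" for k
  have step1: "coeff (skew_mult T (monom 1 l) hdg) k * coeff (skew_mult T (monom 1 j) g) k = G k" for k
  proof -
    have hz: "coeff h (dh + l - k) = 0" if "k < l" using that by (intro coeff_eq_0) linarith
    show ?thesis
      unfolding G_def coeff_sm_monom_left coeff_hd
      using hz by (auto simp: Tn_comp Tn_zero mult.commute)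
  qed
  have "ipn n (skew_mult T (monom 1 l) hdg) (skew_mult T (monom 1 j) g) = (\<Sum>k<n. G k)"
    unfolding ipn_def step1 ..
  also have "\<dots> = (\<Sum>k\<in>{j..dh + l}. G k)"
    by (rule sum.mono_neutral_right) (use l j deg_sum in \<open>auto simp: G_def\<close>)
  also have "{j..dh + l} = {0 + j..t + j}" using j by (auto simp: t_def)
  also have "(\<Sum>k\<in>{0 + j..t + j}. G k) = (\<Sum>m\<in>{0..t}. G (m + j))"
    by (rule sum.shift_bounds_cl_nat_ivl)
  also have "\<dots> = (\<Sum>m\<le>t. (T ^^ j) (coeff g m * (T ^^ m) (coeff h (t - m))))"
  proof (rule sum.cong)
    show "{0..t} = {..t}" by auto
  next
    fix m assume "m \<in> {..t}"
    hence "m \<le> t" by simp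
    hence "dh + l - (m + j) = t - m" "j \<le> m + j" "m + j \<le> dh + l" using j by (auto simp: t_def)
    thus "G (m + j) = (T ^^ j) (coeff g m * (T ^^ m) (coeff h (t - m)))"
      by (simp add: G_def Tn_mult Tn_comp add.commute)
  qed
  also have "\<dots> = (T ^^ j) (coeff (skew_mult T g h) t)"
    by (simp add: coeff_sm Tn_sum)
  also have "\<dots> = 0" using t by (simp add: gh coeff_E Tn_zero)
  finally show ?thesis .
qed

lemma orth:
  assumes b: "b \<in> vecs (n - dh)" and a: "a \<in> vecs dh"
  shows "ipn n (skew_mult T b hdg) (skew_mult T a g) = 0"
proof -
  have eb: "b = (\<Sum>l<n - dh. monom (coeff b l) l)" by (rule vecs_expand[OF b])
  have ea: "a = (\<Sum>j<dh. monom (coeff a j) j)" by (rule vecs_expand[OF a])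
  have "ipn n (skew_mult T b hdg) (skew_mult T a g) =
     ipn n (skew_mult T (\<Sum>l<n - dh. monom (coeff b l) l) hdg) (skew_mult T (\<Sum>j<dh. monom (coeff a j) j) g)"
    by (simp only: eb[symmetric] ea[symmetric])
  also have "\<dots> = 0"
    by (simp add: sm_sum_left ipn_sum_left ipn_sum_right ipn_smult_left ipn_smult_right
        sm_monom_smult[of "coeff b _"] sm_monom_smult[of "coeff a _"] orth_monom)
  finally show ?thesis .
qed

lemma tri:
  assumes c: "c \<in> vecs n"
    and o: "\<forall>j<dh. ipn n c (skew_mult T (monom 1 j) g) = 0"
    and z: "\<forall>k<n - dh. coeff c k = 0"
  shows "c = 0"
proof -
  have "coeff c k = 0" for k
  proof (induction k rule: less_induct)
    case (less k)
    show ?case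
    proof (cases "k < n - dh")
      case True thus ?thesis using z by simp
    next
      case False
      show ?thesis
      proof (cases "k < n")
        case False thus ?thesis using c by (simp add: vecs_def)
      next
        case True
        define j where "j = k - degree g"
        have kj: "j < dh" "j \<le> k" "k - j = degree g" using True \<open>\<not> k < n - dh\<close> deg_sum
          by (auto simp: j_def)
        have "ipn n c (skew_mult T (monom 1 j) g) =
            (\<Sum>k'<n. if k' = k then coeff c k * (T ^^ j) (lead_coeff g) else 0)"
          unfolding ipn_def
        proof (rule sum.cong[OF refl])
          fix k' assume "k' \<in> {..<n}"
          consider "k' < k" | "k' = k" | "k < k'" by linarith
          thus "coeff c k' * coeff (skew_mult T (monom 1 j) g) k' =
              (if k' = k then coeff c k * (T ^^ j) (lead_coeff g) else 0)"
          proof cases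
            case 1 thus ?thesis using less by simp
          next
            case 2 thus ?thesis using kj by (simp add: coeff_sm_monom_left)
          next
            case 3
            hence "coeff g (k' - j) = 0" using kj by (intro coeff_eq_0) linarith
            thus ?thesis using 3 by (simp add: coeff_sm_monom_left Tn_zero)
          qed
        qed
        also have "\<dots> = coeff c k * (T ^^ j) (lead_coeff g)" using True by simp
        finally have "coeff c k * (T ^^ j) (lead_coeff g) = 0" using o kj by simp
        thus ?thesis using g_ne0 by (simp add: Tn_eq0)
      qed
    qed
  qed
  thus ?thesis by (simp add: poly_eqI)
qed

lemma surj_prefix:
  assumes p: "p \<in> vecs (n - dh)"
  shows "\<exists>b\<in>vecs (n - dh). trunc (n - dh) (skew_mult T b hdg) = p"
proof -
  define \<Phi> where "\<Phi> b = trunc (n - dh) (skew_mult T b hdg)" for b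
  have sub: "\<Phi> ` vecs (n - dh) \<subseteq> vecs (n - dh)" by (auto simp: \<Phi>_def trunc_vecs)
  have inj: "inj_on \<Phi> (vecs (n - dh))"
  proof (rule inj_onI)
    fix b b' assume b: "b \<in> vecs (n - dh)" and b': "b' \<in> vecs (n - dh)" and eq: "\<Phi> b = \<Phi> b'"
    define d where "d = b - b'"
    have d: "d \<in> vecs (n - dh)" using b b' by (simp add: d_def vecs_diff)
    have \<Phi>d: "\<Phi> d = 0" using eq by (simp add: \<Phi>_def d_def sm_diff_left trunc_diff)
    have "d = 0"
    proof (rule ccontr)
      assume "d \<noteq> 0"
      hence ex: "\<exists>k. coeff d k \<noteq> 0" by (intro exI[of _ "degree d"]) simp
      define k where "k = (LEAST k. coeff d k \<noteq> 0)"
      have k1: "coeff d k \<noteq> 0" unfolding k_def by (rule LeastI_ex[OF ex])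
      have k2: "\<forall>i<k. coeff d i = 0"
      proof (intro allI impI)
        fix i assume "i < k"
        hence "\<not> coeff d i \<noteq> 0" unfolding k_def by (rule not_less_Least)
        thus "coeff d i = 0" by simp
      qed
      have k3: "k < n - dh"
      proof (rule ccontr)
        assume "\<not> k < n - dh"
        hence "coeff d k = 0" using d by (simp add: vecs_def)
        with k1 show False by simp
      qed
      have "coeff (skew_mult T d hdg) k \<noteq> 0"
        using k1 k2 hd0 by (simp add: coeff_sm_low Tn_eq0)
      moreover have "coeff (\<Phi> d) k = coeff (skew_mult T d hdg) k"
        using k3 by (simp add: \<Phi>_def coeff_trunc)
      ultimately show False using \<Phi>d by simp
    qed
    thus "b = b'" by (simp add: d_def)
  qed
  have "\<Phi> ` vecs (n - dh) = vecs (n - dh)"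
    by (rule endo_inj_surj[OF finite_vecs sub inj])
  hence "p \<in> \<Phi> ` vecs (n - dh)" using p by simp
  then obtain b where "b \<in> vecs (n - dh)" "p = \<Phi> b" by blast
  thus ?thesis unfolding \<Phi>_def by blast
qed

lemma dual_eq:
  "dualF n (skew_gen_code T n g) = {skew_mult T b hdg | b. b \<in> vecs (n - dh)}"
proof (intro set_eqI iffI)
  fix c assume "c \<in> {skew_mult T b hdg | b. b \<in> vecs (n - dh)}"
  then obtain b where b: "b \<in> vecs (n - dh)" "c = skew_mult T b hdg" by blast
  have "c \<in> vecs n" using b(2) sm_vecs[OF b(1), of hdg] deg_sum degree_hd by simp
  moreover have "ipn n c c' = 0" if "c' \<in> skew_gen_code T n g" for c'
  proof -
    have "c' \<in> {c \<in> vecs n. \<exists>a. c = skew_mult T a g}" using that code_eq by simp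
    then obtain a where "c' \<in> vecs n" "c' = skew_mult T a g" by blast
    hence "a \<in> vecs dh" "c' = skew_mult T a g" using code_vecs by auto
    thus ?thesis using orth b by simp
  qed
  ultimately show "c \<in> dualF n (skew_gen_code T n g)" by (simp add: dualF_def)
next
  fix c assume c: "c \<in> dualF n (skew_gen_code T n g)"
  have cv: "c \<in> vecs n" using c by (simp add: dualF_def)
  obtain b where b: "b \<in> vecs (n - dh)" "trunc (n - dh) (skew_mult T b hdg) = trunc (n - dh) c"
    using surj_prefix[OF trunc_vecs] by blast
  have bv: "skew_mult T b hdg \<in> vecs n" using sm_vecs[OF b(1), of hdg] deg_sum degree_hd by simp
  define d where "d = c - skew_mult T b hdg"
  have "d = 0"
  proof (rule tri)
    show "d \<in> vecs n" using cv bv by (simp add: d_def vecs_diff)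
    show "\<forall>j<dh. ipn n d (skew_mult T (monom 1 j) g) = 0"
    proof (intro allI impI)
      fix j assume j: "j < dh"
      have xv: "skew_mult T (monom 1 j) g \<in> vecs n"
        using j deg_sum by (intro sm_vecs[OF monom_vecs[of j "Suc j"]]) auto
      hence "skew_mult T (monom 1 j) g \<in> skew_gen_code T n g" by (auto simp: code_eq)
      hence "ipn n c (skew_mult T (monom 1 j) g) = 0" using c by (simp add: dualF_def)
      moreover have "ipn n (skew_mult T b hdg) (skew_mult T (monom 1 j) g) = 0"
        using orth[OF b(1) monom_vecs[OF j]] .
      ultimately show "ipn n d (skew_mult T (monom 1 j) g) = 0" by (simp add: d_def ipn_diff_left)
    qed
    show "\<forall>k<n - dh. coeff d k = 0"
    proof (intro allI impI)
      fix k assume "k < n - dh"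
      hence "coeff (trunc (n - dh) (skew_mult T b hdg)) k = coeff (skew_mult T b hdg) k"
        "coeff (trunc (n - dh) c) k = coeff c k" by (simp_all add: coeff_trunc)
      thus "coeff d k = 0" using b(2) by (simp add: d_def)
    qed
  qed
  hence "c = skew_mult T b hdg" by (simp add: d_def)
  thus "c \<in> {skew_mult T b hdg | b. b \<in> vecs (n - dh)}" using b by blast
qed

lemma rdvd_iff:
  "right_dvd T (xn_minus_1 n) (skew_mult T hdg h) \<longleftrightarrow> (\<exists>a. hdg = skew_mult T a g)"
proof
  assume "right_dvd T (xn_minus_1 n) (skew_mult T hdg h)"
  then obtain c where "skew_mult T hdg h = skew_mult T c (xn_minus_1 n)" by (auto simp: right_dvd_def)
  hence "skew_mult T hdg h = skew_mult T (skew_mult T c g) h" by (simp add: sm_assoc gh)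
  hence "hdg = skew_mult T c g" using sm_cancel_right[OF h_ne0] by blast
  thus "\<exists>a. hdg = skew_mult T a g" by blast
next
  assume "\<exists>a. hdg = skew_mult T a g"
  then obtain a where "hdg = skew_mult T a g" by blast
  hence "skew_mult T hdg h = skew_mult T a (xn_minus_1 n)" by (simp add: sm_assoc gh)
  thus "right_dvd T (xn_minus_1 n) (skew_mult T hdg h)" by (auto simp: right_dvd_def)
qed

lemma main:
  "dualF n (skew_gen_code T n g) \<subseteq> skew_gen_code T n g \<longleftrightarrow>
     right_dvd T (xn_minus_1 n) (skew_mult T hdg h)"
proof -
  have "dualF n (skew_gen_code T n g) \<subseteq> skew_gen_code T n g \<longleftrightarrow>
      (\<forall>b\<in>vecs (n - dh). \<exists>a. skew_mult T b hdg = skew_mult T a g)"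
  proof
    assume L: "dualF n (skew_gen_code T n g) \<subseteq> skew_gen_code T n g"
    show "\<forall>b\<in>vecs (n - dh). \<exists>a. skew_mult T b hdg = skew_mult T a g"
    proof
      fix b :: "'a poly" assume "b \<in> vecs (n - dh)"
      hence "skew_mult T b hdg \<in> dualF n (skew_gen_code T n g)" unfolding dual_eq by blast
      hence "skew_mult T b hdg \<in> {c \<in> vecs n. \<exists>a. c = skew_mult T a g}" using L code_eq by auto
      thus "\<exists>a. skew_mult T b hdg = skew_mult T a g" by blast
    qed
  next
    assume R: "\<forall>b\<in>vecs (n - dh). \<exists>a. skew_mult T b hdg = skew_mult T a g"
    show "dualF n (skew_gen_code T n g) \<subseteq> skew_gen_code T n g"
    proof
      fix c assume "c \<in> dualF n (skew_gen_code T n g)"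
      then obtain b where b: "b \<in> vecs (n - dh)" "c = skew_mult T b hdg" unfolding dual_eq by blast
      have "c \<in> vecs n" using b(2) sm_vecs[OF b(1), of hdg] deg_sum degree_hd by simp
      moreover obtain a where "c = skew_mult T a g" using R b by blast
      ultimately have "c \<in> {c \<in> vecs n. \<exists>a. c = skew_mult T a g}" by blast
      thus "c \<in> skew_gen_code T n g" using code_eq by simp
    qed
  qed
  also have "\<dots> \<longleftrightarrow> (\<exists>a. hdg = skew_mult T a g)"
  proof (cases "dh < n")
    case True
    show ?thesis
    proof
      assume "\<forall>b\<in>vecs (n - dh). \<exists>a. skew_mult T b hdg = skew_mult T a g"
      moreover have "1 \<in> vecs (n - dh)" using True by (simp add: vecs_iff)
      ultimately obtain a where "skew_mult T 1 hdg = skew_mult T a g" by blast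
      thus "\<exists>a. hdg = skew_mult T a g" by auto
    next
      assume "\<exists>a. hdg = skew_mult T a g"
      then obtain a where "hdg = skew_mult T a g" by blast
      thus "\<forall>b\<in>vecs (n - dh). \<exists>a. skew_mult T b hdg = skew_mult T a g"
        by (auto simp: sm_assoc[symmetric])
    qed
  next
    case False
    hence dg: "degree g = 0" using deg_sum by simp
    have "g = monom (coeff g 0) 0"
      by (rule poly_eqI) (use dg in \<open>auto simp: coeff_monom coeff_eq_0\<close>)
    hence "skew_mult T (monom (inverse (coeff g 0)) 0) g = 1"
      using g0_ne0 sm_monom_monom[of "inverse (coeff g 0)" 0 "coeff g 0" 0] by simp
    hence "skew_mult T (skew_mult T hdg (monom (inverse (coeff g 0)) 0)) g = hdg"
      by (simp add: sm_assoc)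
    hence "\<exists>a. hdg = skew_mult T a g" by metis
    moreover have "n - dh = 0" using False by simp
    ultimately show ?thesis by (auto simp: vecs_0 intro: exI[of _ 0])
  qed
  also have "\<dots> \<longleftrightarrow> right_dvd T (xn_minus_1 n) (skew_mult T hdg h)"
    by (rule rdvd_iff[symmetric])
  finally show ?thesis .
qed

end


lemma prime_CHAR_fin: "prime CHAR('a::{field,finite})"
  by (rule prime_CHAR_semidom) (rule finite_imp_CHAR_pos, simp)

lemma Theta_add: "Theta i (a + b :: 'a::{field,finite}) = Theta i a + Theta i b"
  unfolding Theta_def by (rule freshmans_dream'[OF prime_CHAR_fin refl])

lemma Theta_mult: "Theta i (a * b :: 'a::{field,finite}) = Theta i a * Theta i b"
  unfolding Theta_def by (simp add: power_mult_distrib)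

lemma Theta_one: "Theta i (1 :: 'a::{field,finite}) = 1"
  unfolding Theta_def by simp

lemma Theta_inj: "inj (Theta i :: 'a::{field,finite} \<Rightarrow> 'a)"
proof (rule injI)
  fix a b :: 'a assume eq: "Theta i a = Theta i b"
  have "Theta i (a - b) + Theta i b = Theta i a" using Theta_add[of i "a - b" b] by simp
  hence "Theta i (a - b) = 0" using eq by simp
  hence "(a - b) ^ (CHAR('a) ^ i) = 0" by (simp add: Theta_def)
  thus "a = b" by simp
qed

lemma skewT_Theta: "skewT (Theta i :: 'a::{field,finite} \<Rightarrow> 'a)"
  by unfold_locales (auto simp: Theta_add Theta_mult Theta_one Theta_inj)

lemma finite_order_exists:
  fixes F :: "'a::finite \<Rightarrow> 'a"
  assumes "inj F"
  shows "\<exists>k>0. F ^^ k = id"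
proof -
  have "\<not> inj (\<lambda>k::nat. F ^^ k)"
  proof
    assume "inj (\<lambda>k::nat. F ^^ k)"
    moreover have "finite (range (\<lambda>k::nat. F ^^ k))" by simp
    ultimately have "finite (UNIV :: nat set)" using finite_imageD by blast
    thus False by simp
  qed
  then obtain j k :: nat where jk: "j \<noteq> k" "F ^^ j = F ^^ k" unfolding inj_def by blast
  have "\<exists>j k. j < k \<and> F ^^ j = F ^^ k"
    using jk by (metis linorder_neqE_nat)
  then obtain j k where jk: "j < k" "F ^^ j = F ^^ k" by blast
  have "F ^^ j \<circ> F ^^ (k - j) = F ^^ (j + (k - j))" by (simp only: funpow_add)
  also have "\<dots> = F ^^ j \<circ> id" using jk by simp
  finally have "F ^^ j \<circ> F ^^ (k - j) = F ^^ j \<circ> id" .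
  moreover have "inj (F ^^ j)" using assms by simp
  ultimately have "F ^^ (k - j) = id"
    by (metis fun.inj_map_strong inj_eq)
  thus ?thesis using jk by (intro exI[of _ "k - j"]) auto
qed

lemma aut_ord_dvd:
  fixes F :: "'b \<Rightarrow> 'b"
  assumes "\<exists>k>0. F ^^ k = id" "aut_ord F dvd m"
  shows "F ^^ m = id"
proof -
  have "0 < aut_ord F \<and> F ^^ aut_ord F = id"
    unfolding aut_ord_def by (rule LeastI_ex) (use assms in blast)
  moreover obtain c where "m = aut_ord F * c" using assms by blast
  moreover have "(id::'b \<Rightarrow> 'b) ^^ c = id" for c by (induction c) auto
  ultimately show ?thesis by (metis funpow_mult)
qed

lemma thetaR_funpow: "thetaR F ^^ k = thetaR (F ^^ k)"
proof (induction k)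
  case 0 show ?case by (auto simp: thetaR_def fun_eq_iff rq_eq_iff)
next
  case (Suc k) thus ?case by (auto simp: thetaR_def fun_eq_iff)
qed


section \<open>Decomposition of the dual\<close>

definition dualR :: "nat \<Rightarrow> 'a::comm_ring_1 rq poly set \<Rightarrow> 'a rq poly set" where
  "dualR n B = {y \<in> vecs n. \<forall>y'\<in>B. (\<Sum>j<n. coeff y j * coeff y' j) = 0}"

lemma uR_emb: "u_R * emb_R a = RQ 0 (a::'a::comm_ring_1)"
  by (simp add: u_R_def emb_R_def times_rq_def)

lemma rq_zero_iff: "(x::'a::comm_ring_1 rq) = 0 \<longleftrightarrow> rq_fst x = 0 \<and> rq_snd x = 0"
  by (simp add: rq_eq_iff zero_rq_def)

lemma rq_fst_add: "rq_fst (x + y) = rq_fst x + rq_fst (y::'a::comm_ring_1 rq)"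
  by (simp add: plus_rq_def)
lemma rq_snd_add: "rq_snd (x + y) = rq_snd x + rq_snd (y::'a::comm_ring_1 rq)"
  by (simp add: plus_rq_def)
lemma rq_fst_0 [simp]: "rq_fst (0::'a::comm_ring_1 rq) = 0"
  by (simp add: zero_rq_def)
lemma rq_snd_0 [simp]: "rq_snd (0::'a::comm_ring_1 rq) = 0"
  by (simp add: zero_rq_def)

lemma rq_fst_sum: "rq_fst (sum F A) = (\<Sum>x\<in>A. rq_fst (F x :: 'a::comm_ring_1 rq))"
  by (induction A rule: infinite_finite_induct) (auto simp: rq_fst_add)
lemma rq_snd_sum: "rq_snd (sum F A) = (\<Sum>x\<in>A. rq_snd (F x :: 'a::comm_ring_1 rq))"
  by (induction A rule: infinite_finite_induct) (auto simp: rq_snd_add)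

lemma inner_eq:
  "FqR_inner a b (x, y) (x', y') =
     u_R * emb_R (ipn a x x') + (\<Sum>j<b. coeff y j * coeff y' j)"
  by (simp add: FqR_inner_def ipn_def)

lemma ipn_zero_right [simp]: "ipn n c 0 = 0" and ipn_zero_left [simp]: "ipn n 0 c = 0"
  by (simp_all add: ipn_def)

lemma dual_prod:
  fixes A :: "'a::comm_ring_1 poly set" and B :: "'a rq poly set"
  assumes "0 \<in> A" "0 \<in> B"
  shows "(x, y) \<in> FqR_dual a b (tensor A B) \<longleftrightarrow> x \<in> dualF a A \<and> y \<in> dualR b B"
proof
  assume l: "(x, y) \<in> FqR_dual a b (tensor A B)"
  hence v: "x \<in> vecs a" "y \<in> vecs b" by (auto simp: FqR_dual_def amb_def)
  have x: "ipn a x x' = 0" if "x' \<in> A" for x'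
  proof -
    have "FqR_inner a b (x, y) (x', 0) = 0" using l that assms by (auto simp: FqR_dual_def tensor_def)
    thus ?thesis by (simp add: inner_eq uR_emb rq_zero_iff)
  qed
  have y: "(\<Sum>j<b. coeff y j * coeff y' j) = 0" if "y' \<in> B" for y'
  proof -
    have "FqR_inner a b (x, y) (0, y') = 0" using l that assms by (auto simp: FqR_dual_def tensor_def)
    thus ?thesis by (simp add: inner_eq uR_emb emb_R_def zero_rq_def[symmetric])
  qed
  show "x \<in> dualF a A \<and> y \<in> dualR b B" using v x y by (auto simp: dualF_def dualR_def)
next
  assume r: "x \<in> dualF a A \<and> y \<in> dualR b B"
  show "(x, y) \<in> FqR_dual a b (tensor A B)"
    using r unfolding FqR_dual_def amb_def tensor_def dualF_def dualR_def
    by (auto simp: inner_eq uR_emb zero_rq_def)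
qed

lemma dual_prod_sub:
  fixes A :: "'a::comm_ring_1 poly set" and B :: "'a rq poly set"
  assumes "0 \<in> A" "0 \<in> B"
  shows "FqR_dual a b (tensor A B) \<subseteq> tensor A B \<longleftrightarrow> dualF a A \<subseteq> A \<and> dualR b B \<subseteq> B"
proof
  assume L: "FqR_dual a b (tensor A B) \<subseteq> tensor A B"
  have z1: "0 \<in> dualF a A" by (simp add: dualF_def)
  have z2: "0 \<in> dualR b B" by (simp add: dualR_def)
  show "dualF a A \<subseteq> A \<and> dualR b B \<subseteq> B"
  proof
    show "dualF a A \<subseteq> A"
    proof
      fix x assume "x \<in> dualF a A"
      hence "(x, 0) \<in> FqR_dual a b (tensor A B)" using dual_prod[OF assms] z2 by blast
      thus "x \<in> A" using L by (auto simp: tensor_def)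
    qed
    show "dualR b B \<subseteq> B"
    proof
      fix y assume "y \<in> dualR b B"
      hence "(0, y) \<in> FqR_dual a b (tensor A B)" using dual_prod[OF assms] z1 by blast
      thus "y \<in> B" using L by (auto simp: tensor_def)
    qed
  qed
next
  assume R: "dualF a A \<subseteq> A \<and> dualR b B \<subseteq> B"
  show "FqR_dual a b (tensor A B) \<subseteq> tensor A B"
  proof
    fix l assume "l \<in> FqR_dual a b (tensor A B)"
    moreover obtain x y where "l = (x, y)" by (cases l)
    ultimately show "l \<in> tensor A B" using dual_prod[OF assms] R by (auto simp: tensor_def)
  qed
qed

definition pA :: "'a::comm_ring_1 rq poly \<Rightarrow> 'a poly" where
  "pA y = map_poly rq_fst y"
definition pB :: "'a::comm_ring_1 rq poly \<Rightarrow> 'a poly" where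
  "pB y = map_poly (\<lambda>r. rq_fst r + rq_snd r) y"
definition mk :: "'a::comm_ring_1 poly \<Rightarrow> 'a poly \<Rightarrow> 'a rq poly" where
  "mk c1 c2 = smult xi1 (map_poly emb_R c1) + smult xi2 (map_poly emb_R c2)"

lemma emb_R_0 [simp]: "emb_R 0 = (0::'a::comm_ring_1 rq)"
  by (simp add: emb_R_def zero_rq_def)

lemma coeff_map_emb: "coeff (map_poly emb_R c) k = emb_R (coeff c k)"
  by (simp add: coeff_map_poly)

lemma coeff_mk: "coeff (mk c1 c2) k = RQ (coeff c1 k) (coeff c2 k - coeff c1 k)"
  by (simp add: mk_def coeff_map_emb xi1_def xi2_def u_R_def emb_R_def one_rq_def minus_rq_def
      times_rq_def plus_rq_def)

lemma coeff_pA: "coeff (pA y) k = rq_fst (coeff y k)"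
  by (simp add: pA_def coeff_map_poly)

lemma coeff_pB: "coeff (pB y) k = rq_fst (coeff y k) + rq_snd (coeff y k)"
  by (simp add: pB_def coeff_map_poly)

lemma pA_mk [simp]: "pA (mk c1 c2) = c1"
  by (rule poly_eqI) (simp add: coeff_pA coeff_mk)

lemma pB_mk [simp]: "pB (mk c1 c2) = c2"
  by (rule poly_eqI) (simp add: coeff_pB coeff_mk)

lemma mk_p: "mk (pA y) (pB y) = y"
  by (rule poly_eqI) (simp add: coeff_pA coeff_pB coeff_mk rq_eq_iff)

lemma xi_sum_iff: "y \<in> xi_sum C1 C2 \<longleftrightarrow> pA y \<in> C1 \<and> pB y \<in> C2"
proof
  assume "y \<in> xi_sum C1 C2"
  then obtain c1 c2 where "y = mk c1 c2" "c1 \<in> C1" "c2 \<in> C2" by (auto simp: xi_sum_def mk_def)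
  thus "pA y \<in> C1 \<and> pB y \<in> C2" by simp
next
  assume "pA y \<in> C1 \<and> pB y \<in> C2"
  thus "y \<in> xi_sum C1 C2" unfolding xi_sum_def using mk_p[of y] by (auto simp: mk_def) metis
qed

lemma vecs_p: "y \<in> vecs n \<longleftrightarrow> pA y \<in> vecs n \<and> pB y \<in> vecs n"
  by (auto simp: vecs_def coeff_pA coeff_pB rq_eq_iff zero_rq_def[symmetric] rq_zero_iff)

lemma sum_p:
  "(\<Sum>j<n. coeff y j * coeff y' j) = 0 \<longleftrightarrow> ipn n (pA y) (pA y') = 0 \<and> ipn n (pB y) (pB y') = 0"
proof -
  have f: "rq_fst (\<Sum>j<n. coeff y j * coeff y' j) = ipn n (pA y) (pA y')"
    by (simp add: rq_fst_sum ipn_def coeff_pA times_rq_def)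
  have s: "rq_fst (\<Sum>j<n. coeff y j * coeff y' j) + rq_snd (\<Sum>j<n. coeff y j * coeff y' j)
        = ipn n (pB y) (pB y')"
    by (simp add: rq_fst_sum rq_snd_sum ipn_def coeff_pB times_rq_def sum.distrib[symmetric] algebra_simps)
  show ?thesis using f s by (auto simp: rq_zero_iff)
qed

lemma dualR_iff:
  assumes "0 \<in> C1" "0 \<in> C2"
  shows "y \<in> dualR n (xi_sum C1 C2) \<longleftrightarrow> pA y \<in> dualF n C1 \<and> pB y \<in> dualF n C2"
proof
  assume y: "y \<in> dualR n (xi_sum C1 C2)"
  have v: "pA y \<in> vecs n" "pB y \<in> vecs n" using y vecs_p by (auto simp: dualR_def)
  have a: "ipn n (pA y) c1 = 0" if "c1 \<in> C1" for c1
  proof -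
    have "mk c1 0 \<in> xi_sum C1 C2" using that assms by (simp add: xi_sum_iff)
    hence "(\<Sum>j<n. coeff y j * coeff (mk c1 0) j) = 0" using y by (auto simp: dualR_def)
    thus ?thesis by (simp add: sum_p)
  qed
  have b: "ipn n (pB y) c2 = 0" if "c2 \<in> C2" for c2
  proof -
    have "mk 0 c2 \<in> xi_sum C1 C2" using that assms by (simp add: xi_sum_iff)
    hence "(\<Sum>j<n. coeff y j * coeff (mk 0 c2) j) = 0" using y by (auto simp: dualR_def)
    thus ?thesis by (simp add: sum_p)
  qed
  show "pA y \<in> dualF n C1 \<and> pB y \<in> dualF n C2" using v a b by (auto simp: dualF_def)
next
  assume r: "pA y \<in> dualF n C1 \<and> pB y \<in> dualF n C2"
  show "y \<in> dualR n (xi_sum C1 C2)"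
    using r vecs_p[of y n] by (auto simp: dualR_def dualF_def sum_p xi_sum_iff)
qed

lemma dualR_sub:
  assumes "0 \<in> C1" "0 \<in> C2"
  shows "dualR n (xi_sum C1 C2) \<subseteq> xi_sum C1 C2 \<longleftrightarrow> dualF n C1 \<subseteq> C1 \<and> dualF n C2 \<subseteq> C2"
proof
  assume L: "dualR n (xi_sum C1 C2) \<subseteq> xi_sum C1 C2"
  have z: "0 \<in> dualF n C" for C :: "'a poly set" by (simp add: dualF_def)
  show "dualF n C1 \<subseteq> C1 \<and> dualF n C2 \<subseteq> C2"
  proof
    show "dualF n C1 \<subseteq> C1"
    proof
      fix x assume "x \<in> dualF n C1"
      hence "mk x 0 \<in> dualR n (xi_sum C1 C2)" using dualR_iff[OF assms] z by simp
      hence "mk x 0 \<in> xi_sum C1 C2" using L by blast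
      thus "x \<in> C1" by (simp add: xi_sum_iff)
    qed
    show "dualF n C2 \<subseteq> C2"
    proof
      fix x assume "x \<in> dualF n C2"
      hence "mk 0 x \<in> dualR n (xi_sum C1 C2)" using dualR_iff[OF assms] z by simp
      hence "mk 0 x \<in> xi_sum C1 C2" using L by blast
      thus "x \<in> C2" by (simp add: xi_sum_iff)
    qed
  qed
next
  assume "dualF n C1 \<subseteq> C1 \<and> dualF n C2 \<subseteq> C2"
  thus "dualR n (xi_sum C1 C2) \<subseteq> xi_sum C1 C2"
    using dualR_iff[OF assms] xi_sum_iff by blast
qed


theorem theorem11:
  fixes i \<alpha> \<beta> :: nat
    and f h g1 g2 h1 h2 :: "'a::{field,finite} poly"
    and g :: "'a rq poly"
    and C' C1 C2 :: "'a poly set"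
    and CR :: "'a rq poly set"
    and C :: "('a poly \<times> 'a rq poly) set"
  assumes "0 < \<alpha>" and "0 < \<beta>"
    and "aut_ord (Theta i :: 'a \<Rightarrow> 'a) dvd \<alpha>"
    and "aut_ord (thetaR (Theta i :: 'a \<Rightarrow> 'a)) dvd \<beta>"
    and "C' = skew_gen_code (Theta i) \<alpha> f"
    and "C1 = skew_gen_code (Theta i) \<beta> g1"
    and "C2 = skew_gen_code (Theta i) \<beta> g2"
    and "g = smult xi1 (map_poly emb_R g1) + smult xi2 (map_poly emb_R g2)"
    and "CR = xi_sum C1 C2"
    and "CR = skew_gen_code (thetaR (Theta i)) \<beta> g"
    and "C = tensor C' CR"
    and "FqR_skew_cyclic (Theta i) \<alpha> \<beta> C"
    and "xn_minus_1 \<alpha> = skew_mult (Theta i) h f"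
    and "xn_minus_1 \<beta> = skew_mult (Theta i) h1 g1"
    and "xn_minus_1 \<beta> = skew_mult (Theta i) h2 g2"
  shows "FqR_dual \<alpha> \<beta> C \<subseteq> C \<longleftrightarrow>
           right_dvd (Theta i) (xn_minus_1 \<alpha>) (skew_mult (Theta i) (dagger (Theta i) h) h) \<and>
           right_dvd (Theta i) (xn_minus_1 \<beta>) (skew_mult (Theta i) (dagger (Theta i) h1) h1) \<and>
           right_dvd (Theta i) (xn_minus_1 \<beta>) (skew_mult (Theta i) (dagger (Theta i) h2) h2)"
proof -
  interpret S: skewT "Theta i :: 'a \<Rightarrow> 'a" by (rule skewT_Theta)
  have ex: "\<exists>k>0. (Theta i :: 'a \<Rightarrow> 'a) ^^ k = id"
    by (rule finite_order_exists[OF Theta_inj])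
  have Ta: "(Theta i :: 'a \<Rightarrow> 'a) ^^ \<alpha> = id" by (rule aut_ord_dvd[OF ex assms(3)])
  have exR: "\<exists>k>0. thetaR (Theta i :: 'a \<Rightarrow> 'a) ^^ k = id"
  proof -
    obtain k where k: "k > 0" "(Theta i :: 'a \<Rightarrow> 'a) ^^ k = id" using ex by blast
    have "thetaR (id :: 'a \<Rightarrow> 'a) = id" by (auto simp: thetaR_def fun_eq_iff rq_eq_iff)
    thus ?thesis using k by (intro exI[of _ k]) (simp add: thetaR_funpow)
  qed
  have "thetaR (Theta i :: 'a \<Rightarrow> 'a) ^^ \<beta> = id" by (rule aut_ord_dvd[OF exR assms(4)])
  hence "thetaR ((Theta i :: 'a \<Rightarrow> 'a) ^^ \<beta>) = id" by (simp add: thetaR_funpow)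
  hence "thetaR ((Theta i :: 'a \<Rightarrow> 'a) ^^ \<beta>) (RQ a 0) = RQ a 0" for a by simp
  hence Tb: "(Theta i :: 'a \<Rightarrow> 'a) ^^ \<beta> = id" by (auto simp: thetaR_def fun_eq_iff)
  interpret A: skew_code "Theta i :: 'a \<Rightarrow> 'a" \<alpha> h f
    by unfold_locales (use assms Ta in auto)
  interpret B1: skew_code "Theta i :: 'a \<Rightarrow> 'a" \<beta> h1 g1
    by unfold_locales (use assms Tb in auto)
  interpret B2: skew_code "Theta i :: 'a \<Rightarrow> 'a" \<beta> h2 g2
    by unfold_locales (use assms Tb in auto)
  have "0 \<in> skew_gen_code (Theta i) n p" for n and p :: "'a poly"
    unfolding skew_gen_code_def by (auto intro!: exI[of _ 0])
  hence z1: "0 \<in> C'" "0 \<in> C1" "0 \<in> C2" using assms by auto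
  have zR: "0 \<in> CR" using z1 assms(9) xi_sum_iff[of 0 C1 C2]
    by (simp add: pA_def pB_def)
  have "FqR_dual \<alpha> \<beta> C \<subseteq> C \<longleftrightarrow> dualF \<alpha> C' \<subseteq> C' \<and> dualR \<beta> CR \<subseteq> CR"
    using assms(11) dual_prod_sub[OF z1(1) zR] by simp
  also have "\<dots> \<longleftrightarrow> dualF \<alpha> C' \<subseteq> C' \<and> dualF \<beta> C1 \<subseteq> C1 \<and> dualF \<beta> C2 \<subseteq> C2"
    using assms(9) dualR_sub[OF z1(2,3)] by simp
  also have "\<dots> \<longleftrightarrow> right_dvd (Theta i) (xn_minus_1 \<alpha>) (skew_mult (Theta i) (dagger (Theta i) h) h) \<and>
           right_dvd (Theta i) (xn_minus_1 \<beta>) (skew_mult (Theta i) (dagger (Theta i) h1) h1) \<and>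
           right_dvd (Theta i) (xn_minus_1 \<beta>) (skew_mult (Theta i) (dagger (Theta i) h2) h2)"
    using A.main B1.main B2.main assms(5,6,7) by simp
  finally show ?thesis .
qed

end
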